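(* There exists $\kappa>0$ such that for every $\omega\in\partial B\setminus\{z=0\}$, $$\gamma(s,\omega)\in\Gamma_{B,\kappa}(\omega)\quad\text{for all }s\in(0,1).$$
   Context: The first Heisenberg group $\mathbb{H}^1$ is $\mathbb{R}^3$ (points $(z,t)$, $z=x+\mathrm{i}y$) with product $(x,y,t)\cdot(x',y',t')=(x+x',y+y',t+t'-2xy'+2yx')$. Korányi norm $\|(z,t)\|=(|z|^4+t^2)^{1/4}$, distance $d(p,q)=\|q^{-1}\cdot p\|$, $d(q,A)=\inf_{a\in A}d(q,a)$, $B=\{q:\|q\|<1\}$. Radial curves: for $\omega=(z,t)\in\partial B$, $z\ne0$, $\gamma(s,\omega)=\big(sz\,e^{-\mathrm{i}\frac{t}{|z|^2}\log s},s^2t\big)$. For $\kappa>0$ and $\omega\in\partial B$, the nontangential region is $\Gamma_{B,\kappa}(\omega)=\{q\in B: d(q,\omega)<(1+\kappa)\,d(q,\partial B)\}$. *)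

theory Defs
  imports "HOL-Analysis.Analysis"
begin

text \<open>First Heisenberg group H^1: points (z,t) with z complex, t real.
  (x,y,t)*(x',y',t') = (x+x', y+y', t+t' - 2xy' + 2yx').\<close>

type_synonym heis = "complex \<times> real"

definition hmult :: "heis \<Rightarrow> heis \<Rightarrow> heis" where
  "hmult p q = (fst p + fst q,
     snd p + snd q - 2 * Re (fst p) * Im (fst q) + 2 * Im (fst p) * Re (fst q))"

definition hinv :: "heis \<Rightarrow> heis" where
  "hinv p = (- fst p, - snd p)"

definition knorm :: "heis \<Rightarrow> real" where
  "knorm p = root 4 (cmod (fst p) ^ 4 + (snd p)^2)"

definition hdist :: "heis \<Rightarrow> heis \<Rightarrow> real" where
  "hdist p q = knorm (hmult (hinv q) p)"

definition hsetdist :: "heis \<Rightarrow> heis set \<Rightarrow> real" where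
  "hsetdist q A = (INF a\<in>A. hdist q a)"

definition hball :: "heis set" where
  "hball = {q. knorm q < 1}"

text \<open>Boundary of B in the Euclidean topology on R^3 = C x R.\<close>
definition hsphere :: "heis set" where
  "hsphere = frontier hball"

definition radial :: "real \<Rightarrow> heis \<Rightarrow> heis" where
  "radial s \<omega> = (s * fst \<omega> * cis (- (snd \<omega> / (cmod (fst \<omega>))^2) * ln s),
                  s^2 * snd \<omega>)"

definition ntregion :: "real \<Rightarrow> heis \<Rightarrow> heis set" where
  "ntregion \<kappa> \<omega> = {q \<in> hball. hdist q \<omega> < (1 + \<kappa>) * hsetdist q hsphere}"

end

theory Submission
  imports Defs
begin


lemma sin_cubic: "\<bar>x - sin x\<bar> \<le> \<bar>x\<bar>^3 / 6" for x :: real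
proof -
  have "\<bar>sin x - (\<Sum>m<3. sin_coeff m * x ^ m)\<bar> \<le> inverse (fact 3) * \<bar>x\<bar> ^ 3"
    by (rule Maclaurin_sin_bound)
  moreover have "(\<Sum>m<3. sin_coeff m * x ^ m) = x"
    by (simp add: numeral_3_eq_3 sin_coeff_def lessThan_Suc)
  ultimately show ?thesis by (simp add: abs_minus_commute fact_numeral)
qed

lemma one_minus_cos: "1 - cos x \<le> x^2 / 2" for x :: real
proof -
  have "1 - cos x = 2 * (sin (x/2))^2"
    using cos_double_sin[of "x/2"] by simp
  also have "\<dots> \<le> 2 * (x/2)^2"
    using abs_sin_x_le_abs_x[of "x/2"] abs_le_square_iff[of "sin (x/2)" "x/2"] by simp
  finally show ?thesis by (simp add: power2_eq_square)
qed

lemma ln_bounds: fixes s :: real assumes "0 < s" "s < 1"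
  shows "1 - s \<le> - ln s" "- ln s \<le> (1 - s) / s"
proof -
  show "1 - s \<le> - ln s" using ln_le_minus_one[of s] assms by simp
  have "ln (1/s) \<le> 1/s - 1" using ln_le_minus_one[of "1/s"] assms by simp
  then show "- ln s \<le> (1 - s) / s" using assms by (simp add: ln_div diff_divide_distrib)
qed



lemma est_main:
  fixes s r t :: real
  assumes s: "0 < s" "s < 1" and r: "0 < r" and rt: "r^2 + t^2 = 1"
  defines "l \<equiv> - ln s" and "e \<equiv> 1 - s^2"
  defines "\<theta> \<equiv> t * l / r"
  shows "(r + e) * r * ((1-s)^2 + 2 * s * (1 - cos \<theta>)) \<le> 18 * e^2"
    and "(r + e) * \<bar>(1 - s^2) * t - 2 * s * r * sin \<theta>\<bar> \<le> 18 * e^2"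
proof -
  have r1: "r \<le> 1"
  proof -
    have "r^2 \<le> 1" using rt zero_le_power2[of t] by linarith
    then show ?thesis using abs_square_le_1[of r] by simp
  qed
  have t1: "\<bar>t\<bar> \<le> 1" proof -
    have "t^2 \<le> 1" using rt zero_le_power2[of r] by linarith
    thus ?thesis using abs_square_le_1[of t] by simp
  qed
  have ss: "s^2 < s" using s by (simp add: power2_eq_square)
  have e0: "0 < e" "e \<le> 1" using s ss by (auto simp: e_def)
  have se: "1 - s \<le> e" using ss by (simp add: e_def)
  have c0: "0 \<le> 1 - cos \<theta>" "1 - cos \<theta> \<le> 2" using cos_le_one[of \<theta>] cos_ge_minus_one[of \<theta>] by auto
  have rth: "r * \<theta> = t * l" using r by (simp add: \<theta>_def)
  have l0: "1 - s \<le> l" "l \<le> (1-s)/s" using ln_bounds[OF s] by (auto simp: l_def)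
  define X where "X = 1 - cos \<theta>"
  have X0: "0 \<le> X" "X \<le> 2" "X \<le> \<theta>^2/2" using c0 one_minus_cos[of \<theta>] by (auto simp: X_def)
  have re: "0 < r + e" using r e0 by simp
  have sX: "0 \<le> 2 * s * X" "2 * s * X \<le> 4" using s X0 mult_mono[of X 2 s 1] by (auto intro!: mult_nonneg_nonneg)
  show "(r + e) * r * ((1-s)^2 + 2 * s * (1 - cos \<theta>)) \<le> 18 * e^2"
  proof (cases "s < 1/2")
    case True
    have "s^2 < (1/2)^2" using True s by (intro power_strict_mono) auto
    hence "s^2 < 1/4" by (simp add: power2_eq_square)
    hence e34: "3/4 < e" by (simp add: e_def)
    have "e^2 \<ge> (3/4)^2" using e34 by (intro power_mono) auto
    have "(1-s)^2 \<le> 1" using s by (simp add: abs_square_le_1)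
    hence A5: "(1-s)^2 + 2 * s * X \<le> 5" using sX by linarith
    have rr: "(r + e) * r \<le> 2" using r1 e0 r mult_mono[of "r+e" 2 r 1] by simp
    have "(r + e) * r * ((1-s)^2 + 2 * s * X) \<le> 2 * 5"
      using A5 rr sX re r by (intro mult_mono) auto
    moreover have "e^2 \<ge> 9/16" using \<open>e^2 \<ge> (3/4)^2\<close> by (simp add: power2_eq_square)
    ultimately show ?thesis unfolding X_def by linarith
  next
    case False
    have "1/s \<le> 2" using False s by (simp add: field_simps)
    hence "(1 - s) * (1/s) \<le> (1 - s) * 2" using s by (intro mult_left_mono) auto
    hence "l \<le> 2 * (1 - s)" using l0 s by simp
    hence l2: "l \<le> 2 * e" using se by simp
    have l00: "0 \<le> l" using l0 s by simp
    have p1: "(r + e) * r * (1-s)^2 \<le> 2 * e^2"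
    proof -
      have "(1-s)^2 \<le> e^2" using se s by (intro power_mono) auto
      moreover have "(r + e) * r \<le> 2" using r1 e0 r mult_mono[of "r+e" 2 r 1] by simp
      ultimately show ?thesis using re r mult_mono[of "(r+e)*r" 2 "(1-s)^2" "e^2"] by simp
    qed
    have p2: "(r + e) * r * (2 * s * X) \<le> 8 * e^2"
    proof (cases "e \<le> r")
      case True
      have "(r + e) * r * (2 * s * X) \<le> (2 * r) * r * (2 * X)"
        using True r s X0 e0 by (intro mult_mono) auto
      also have "\<dots> \<le> (2 * r) * r * (\<theta>^2)" using X0 r by simp
      also have "\<dots> = 2 * (r * \<theta>)^2" by (simp add: power2_eq_square algebra_simps)
      also have "\<dots> = 2 * (t * l)^2" using rth by simp
      also have "\<dots> \<le> 2 * l^2"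
      proof -
        have "(t*l)^2 = t^2 * l^2" by (simp add: power_mult_distrib)
        also have "\<dots> \<le> 1 * l^2" using t1 abs_square_le_1[of t] by (intro mult_right_mono) auto
        finally show ?thesis by simp
      qed
      also have "\<dots> \<le> 2 * (2*e)^2" using l2 l00 power_mono[of l "2*e" 2] by simp
      finally show ?thesis by (simp add: power2_eq_square)
    next
      case False
      have "(r + e) * r * (2 * s * X) \<le> (2 * e) * e * 4"
        using False r sX e0 by (intro mult_mono) auto
      then show ?thesis by (simp add: power2_eq_square)
    qed
    have "(r + e) * r * ((1-s)^2 + 2 * s * X) = (r + e) * r * (1-s)^2 + (r + e) * r * (2 * s * X)"
      by (simp add: algebra_simps)
    then show ?thesis using p1 p2 zero_le_power2[of e] unfolding X_def by linarith
  qed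
  show "(r + e) * \<bar>(1 - s^2) * t - 2 * s * r * sin \<theta>\<bar> \<le> 18 * e^2"
  proof (cases "s < 1/2")
    case True
    have "s^2 < (1/2)^2" using True s by (intro power_strict_mono) auto
    hence "s^2 < 1/4" by (simp add: power2_eq_square)
    hence e34: "3/4 < e" by (simp add: e_def)
    have "e^2 \<ge> (3/4)^2" using e34 by (intro power_mono) auto
    hence e916: "e^2 \<ge> 9/16" by (simp add: power2_eq_square)
    have b1: "\<bar>(1 - s^2) * t\<bar> \<le> 1" using e0 t1 by (simp add: abs_mult e_def[symmetric] mult_le_one)
    have b2: "\<bar>2 * s * r * sin \<theta>\<bar> \<le> 2"
    proof -
      have "\<bar>2 * s * r * sin \<theta>\<bar> = 2 * (s * (r * \<bar>sin \<theta>\<bar>))" using s r by (simp add: abs_mult)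
      also have "s * (r * \<bar>sin \<theta>\<bar>) \<le> 1" using s r r1 by (intro mult_le_one mult_le_one) auto
      finally show ?thesis by simp
    qed
    have "\<bar>(1 - s^2) * t - 2 * s * r * sin \<theta>\<bar> \<le> 3" using b1 b2 by linarith
    moreover have "r + e \<le> 2" using r1 e0 by simp
    ultimately have "(r + e) * \<bar>(1 - s^2) * t - 2 * s * r * sin \<theta>\<bar> \<le> 2 * 3"
      using re by (intro mult_mono) auto
    then show ?thesis using e916 by linarith
  next
    case False
    have "1/s \<le> 2" using False s by (simp add: field_simps)
    hence "(1 - s) * (1/s) \<le> (1 - s) * 2" using s by (intro mult_left_mono) auto
    hence "l \<le> 2 * (1 - s)" using l0 s by simp
    hence l2: "l \<le> 2 * e" using se by simp
    have l00: "0 \<le> l" using l0 s by simp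
    define D where "D = 1 - s^2 - 2 * s * l"
    have D1: "D \<le> (1-s)^2"
    proof -
      have "2 * s * (1 - s) \<le> 2 * s * l" using l0 s by simp
      thus ?thesis by (simp add: D_def power2_eq_square algebra_simps)
    qed
    have D2: "- ((1-s)^2) \<le> D"
    proof -
      have "2 * s * l \<le> 2 * s * ((1-s)/s)" using l0 s by (intro mult_left_mono) auto
      also have "\<dots> = 2 * (1 - s)" using s by simp
      finally show ?thesis by (simp add: D_def power2_eq_square algebra_simps)
    qed
    have De: "\<bar>D\<bar> \<le> e^2"
    proof -
      have "(1-s)^2 \<le> e^2" using se s by (intro power_mono) auto
      thus ?thesis using D1 D2 by linarith
    qed
    have Beq: "(1 - s^2) * t - 2 * s * r * sin \<theta> = t * D + 2 * s * (r * (\<theta> - sin \<theta>))"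
      using rth by (simp add: D_def algebra_simps)
    have q1: "(r + e) * \<bar>t * D\<bar> \<le> 2 * e^2"
    proof -
      have "\<bar>t * D\<bar> \<le> 1 * e^2" using t1 De mult_mono[of "\<bar>t\<bar>" 1 "\<bar>D\<bar>" "e^2"] by (simp add: abs_mult)
      moreover have "r + e \<le> 2" using r1 e0 by simp
      ultimately show ?thesis using re mult_mono[of "r+e" 2 "\<bar>t * D\<bar>" "e^2"] by simp
    qed
    have q2: "(r + e) * \<bar>2 * s * (r * (\<theta> - sin \<theta>))\<bar> \<le> 16 * e^2"
    proof (cases "e \<le> r")
      case True
      have "(r + e) * \<bar>2 * s * (r * (\<theta> - sin \<theta>))\<bar> = (r + e) * (2 * s) * (r * \<bar>\<theta> - sin \<theta>\<bar>)"
        using s r re by (simp add: abs_mult)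
      also have "\<dots> \<le> (2 * r) * 2 * (r * (\<bar>\<theta>\<bar>^3 / 6))"
        using True s r sin_cubic[of \<theta>] by (intro mult_mono) auto
      also have "\<dots> = (2/3) * (r^2 * \<bar>\<theta>\<bar>^3)" by (simp add: power2_eq_square)
      also have "\<dots> \<le> (2/3) * (8 * e^2)"
      proof -
        have "r * (r^2 * \<bar>\<theta>\<bar>^3) = (r * \<bar>\<theta>\<bar>)^3"
          by (simp add: power3_eq_cube power2_eq_square algebra_simps)
        also have "r * \<bar>\<theta>\<bar> = \<bar>t * l\<bar>" using rth r by (metis abs_mult abs_of_pos)
        finally have "r * (r^2 * \<bar>\<theta>\<bar>^3) = \<bar>t * l\<bar>^3" .
        also have "\<dots> \<le> l^3"
        proof -
          have "\<bar>t * l\<bar> \<le> l" using t1 l00 mult_right_mono[of "\<bar>t\<bar>" 1 l] by (simp add: abs_mult)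
          thus ?thesis by (intro power_mono) auto
        qed
        also have "\<dots> \<le> (2*e)^3" using l2 l00 by (intro power_mono) auto
        also have "\<dots> = 8 * e * e^2" by (simp add: power3_eq_cube power2_eq_square)
        also have "\<dots> \<le> 8 * r * e^2" using True by (simp add: mult_right_mono)
        finally have "r * (r^2 * \<bar>\<theta>\<bar>^3) \<le> r * (8 * e^2)" by simp
        thus ?thesis using r by simp
      qed
      also have "\<dots> \<le> 16 * e^2" using zero_le_power2[of e] by linarith
      finally show ?thesis .
    next
      case False
      have "r * \<bar>\<theta> - sin \<theta>\<bar> \<le> r * (2 * \<bar>\<theta>\<bar>)"
        using r abs_sin_x_le_abs_x[of \<theta>] by (intro mult_left_mono) auto
      also have "\<dots> = 2 * \<bar>t * l\<bar>" using rth r by (metis abs_mult abs_of_pos mult.left_commute)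
      also have "\<dots> \<le> 2 * l" using t1 l00 mult_right_mono[of "\<bar>t\<bar>" 1 l] by (simp add: abs_mult)
      also have "\<dots> \<le> 4 * e" using l2 by simp
      finally have h: "r * \<bar>\<theta> - sin \<theta>\<bar> \<le> 4 * e" .
      have "(r + e) * \<bar>2 * s * (r * (\<theta> - sin \<theta>))\<bar> = ((r + e) * (2 * s)) * (r * \<bar>\<theta> - sin \<theta>\<bar>)"
        using s r re by (simp add: abs_mult)
      also have "\<dots> \<le> (2 * e * 2) * (4 * e)"
      proof (rule mult_mono)
        have "r + e \<le> 2 * e" "2 * s \<le> 2" "0 \<le> 2 * e" "0 \<le> 2 * s" using False s e0 by auto
        thus "(r + e) * (2 * s) \<le> 2 * e * 2" by (rule mult_mono)
        show "r * \<bar>\<theta> - sin \<theta>\<bar> \<le> 4 * e" by (rule h)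
        show "0 \<le> 2 * e * 2" using e0 by simp
        show "0 \<le> r * \<bar>\<theta> - sin \<theta>\<bar>" using r by simp
      qed
      finally show ?thesis by (simp add: power2_eq_square)
    qed
    have "(r + e) * \<bar>(1 - s^2) * t - 2 * s * r * sin \<theta>\<bar> \<le> (r + e) * \<bar>t * D\<bar> + (r + e) * \<bar>2 * s * (r * (\<theta> - sin \<theta>))\<bar>"
      unfolding Beq using re by (simp add: distrib_left[symmetric] abs_triangle_ineq)
    then show ?thesis using q1 q2 by linarith
  qed
qed



lemma knorm_nonneg: "0 \<le> knorm p"
  unfolding knorm_def by simp

lemma knorm_pow4: "knorm p ^ 4 = cmod (fst p) ^ 4 + (snd p)^2"
  unfolding knorm_def by (simp add: add_nonneg_nonneg)

lemma knorm_eqI: assumes "0 \<le> c" "cmod (fst p) ^ 4 + (snd p)^2 = c ^ 4" shows "knorm p = c"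
proof -
  have "knorm p ^ 4 = c ^ 4" using assms knorm_pow4 by simp
  thus ?thesis using knorm_nonneg[of p] assms(1) power_eq_imp_eq_base[of "knorm p" 4 c] by simp
qed

lemma cmod_le_knorm: "cmod (fst p) \<le> knorm p"
proof -
  have "cmod (fst p) ^ 4 \<le> knorm p ^ 4" using knorm_pow4[of p] by simp
  thus ?thesis using knorm_nonneg[of p] power_le_imp_le_base[of "cmod (fst p)" 3 "knorm p"]
    by (simp add: numeral_eq_Suc)
qed

lemma knorm_sq_cmod: "knorm p ^ 2 = cmod (Complex (cmod (fst p) ^ 2) (snd p))"
proof -
  have c2: "cmod (Complex X Y)^2 = X^2 + Y^2" for X Y by (simp add: cmod_power2)
  have "(knorm p ^ 2)^2 = knorm p ^ 4" by (simp flip: power_mult)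
  also have "\<dots> = (cmod (fst p) ^ 2)^2 + (snd p)^2" by (simp add: knorm_pow4 flip: power_mult)
  also have "\<dots> = cmod (Complex (cmod (fst p) ^ 2) (snd p)) ^ 2" by (simp only: c2)
  finally have "(knorm p ^ 2)^2 = cmod (Complex (cmod (fst p) ^ 2) (snd p)) ^ 2" .
  thus ?thesis by (rule power2_eq_imp_eq) (simp_all add: knorm_nonneg)
qed

lemma rev_tri:
  "knorm a ^ 2 \<le> knorm q ^ 2 + knorm (hmult (hinv a) q) ^ 2 + 2 * cmod (fst q) * knorm (hmult (hinv a) q)"
proof -
  define h where "h = hmult (hinv a) q"
  define W where "W = (\<lambda>p::heis. Complex (cmod (fst p) ^ 2) (snd p))"
  define \<eta> where "\<eta> = fst h"
  have eq: "W a = W q + cnj (W h) - 2 * fst q * cnj \<eta>"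
    unfolding W_def h_def \<eta>_def hmult_def hinv_def
    apply (simp add: complex_eq_iff cmod_power2)
    apply (simp add: power2_eq_square algebra_simps)
    done
  have "cmod (W a) \<le> cmod (W q) + cmod (cnj (W h)) + cmod (2 * fst q * cnj \<eta>)"
    unfolding eq using norm_triangle_ineq4[of "W q + cnj (W h)" "2 * fst q * cnj \<eta>"]
      norm_triangle_ineq[of "W q" "cnj (W h)"] by linarith
  also have "cmod (2 * fst q * cnj \<eta>) = 2 * cmod (fst q) * cmod \<eta>" by (simp add: norm_mult)
  also have "\<dots> \<le> 2 * cmod (fst q) * knorm h" unfolding \<eta>_def by (intro mult_left_mono cmod_le_knorm) auto
  finally show ?thesis using knorm_sq_cmod[of a] knorm_sq_cmod[of q] knorm_sq_cmod[of h]
    by (simp add: W_def h_def)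
qed

lemma knorm_cont: "continuous_on UNIV knorm"
  unfolding knorm_def by (intro continuous_intros)

lemma hsphere_norm: assumes "a \<in> hsphere" shows "knorm a = 1"
proof -
  have op: "open hball" unfolding hball_def
    using open_Collect_less[OF knorm_cont continuous_on_const] by simp
  have cl: "closed {q. knorm q \<le> 1}"
    using closed_Collect_le[OF knorm_cont continuous_on_const] by simp
  have "closure hball \<subseteq> {q. knorm q \<le> 1}"
    by (rule closure_minimal) (auto simp: hball_def cl)
  moreover have "a \<in> closure hball" "a \<notin> hball"
    using assms op unfolding hsphere_def frontier_def by (auto simp: interior_open)
  ultimately show ?thesis by (auto simp: hball_def)
qed



lemma comp1:
  fixes z :: complex and s c :: real
  shows "cmod (- z + complex_of_real s * z * cis c) ^ 2 = cmod z ^ 2 * ((1-s)^2 + 2 * s * (1 - cos c))"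
proof -
  have e1: "- z + complex_of_real s * z * cis c = z * (complex_of_real s * cis c - 1)" by (simp add: algebra_simps)
  have e2: "cmod (complex_of_real s * cis c - 1) ^ 2 = (s * cos c - 1)^2 + (s * sin c)^2"
    by (simp add: cmod_power2)
  have e3: "(s * cos c - 1)^2 + (s * sin c)^2 = s^2 - 2 * s * cos c + 1"
    using sin_cos_squared_add[of c] by algebra
  have "cmod (- z + complex_of_real s * z * cis c) ^ 2 = cmod z ^ 2 * (s^2 - 2 * s * cos c + 1)"
    unfolding e1 norm_mult power_mult_distrib[of "cmod z"] e2 e3 by (rule refl)
  then show ?thesis by (simp add: power2_eq_square algebra_simps)
qed

lemma comp2:
  fixes z :: complex and s c t :: real
  shows "- t + s^2 * t - 2 * Re (- z) * Im (complex_of_real s * z * cis c) + 2 * Im (- z) * Re (complex_of_real s * z * cis c)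
     = - ((1 - s^2) * t - 2 * s * cmod z ^ 2 * sin c)"
  apply (simp add: cmod_power2)
  apply (simp add: power2_eq_square algebra_simps)
  done



theorem proposition2p6:
  shows "\<exists>\<kappa>>0. \<forall>\<omega>\<in>hsphere. fst \<omega> \<noteq> 0 \<longrightarrow>
           (\<forall>s\<in>{0<..<1}. radial s \<omega> \<in> ntregion \<kappa> \<omega>)"
proof (intro exI[of _ 16] conjI ballI impI)
  fix \<omega> s assume om: "\<omega> \<in> hsphere" and z0: "fst \<omega> \<noteq> 0" and sI: "s \<in> {0<..<(1::real)}"
  have s: "0 < s" "s < 1" using sI by auto
  define z where "z = fst \<omega>"
  define t where "t = snd \<omega>"
  define m where "m = cmod z"
  define r where "r = m^2"
  define l where "l = - ln s"
  define e where "e = 1 - s^2"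
  define \<theta> where "\<theta> = t * l / r"
  have m0: "0 < m" using z0 by (simp add: m_def z_def)
  have r0: "0 < r" using m0 by (simp add: r_def)
  have om1: "m^4 + t^2 = 1" using hsphere_norm[OF om] knorm_pow4[of \<omega>] by (simp add: m_def z_def t_def)
  have rt: "r^2 + t^2 = 1" using om1 by (simp add: r_def flip: power_mult)
  have ss: "s^2 < s" using s by (simp add: power2_eq_square)
  have e0: "0 < e" using s ss by (simp add: e_def)
  have rad: "radial s \<omega> = (complex_of_real s * z * cis \<theta>, s^2 * t)"
    unfolding radial_def \<theta>_def l_def r_def m_def z_def t_def by simp
  define q where "q = radial s \<omega>"
  have kq: "knorm q = s"
  proof (rule knorm_eqI)
    show "0 \<le> s" using s by simp
    have "cmod (fst q) = s * m" using s by (simp add: q_def rad norm_mult m_def)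
    hence "cmod (fst q) ^ 4 + (snd q)^2 = s^4 * (m^4 + t^2)"
      by (simp add: q_def rad power_mult_distrib algebra_simps flip: power_mult)
    thus "cmod (fst q) ^ 4 + (snd q)^2 = s^4" using om1 by simp
  qed
  have cq: "cmod (fst q) \<le> m" using s mult_right_mono[of s 1 "cmod z"] by (simp add: q_def rad norm_mult m_def)
  define A where "A = (1-s)^2 + 2 * s * (1 - cos \<theta>)"
  define B where "B = (1 - s^2) * t - 2 * s * r * sin \<theta>"
  have est1: "(r + e) * r * A \<le> 18 * e^2" and est2: "(r + e) * \<bar>B\<bar> \<le> 18 * e^2"
    using est_main[OF s r0 rt] unfolding A_def B_def \<theta>_def l_def e_def by auto
  define N where "N = hdist q \<omega>"
  have N0: "0 \<le> N" by (simp add: N_def hdist_def knorm_nonneg)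
  have A0: "0 \<le> A" unfolding A_def using s cos_le_one[of \<theta>] by (intro add_nonneg_nonneg mult_nonneg_nonneg) auto
  have N4: "N^4 = (r * A)^2 + B^2"
  proof -
    have h1: "hmult (hinv \<omega>) q = (- z + complex_of_real s * z * cis \<theta>, - t + s^2 * t - 2 * Re (- z) * Im (complex_of_real s * z * cis \<theta>) + 2 * Im (- z) * Re (complex_of_real s * z * cis \<theta>))"
      unfolding hmult_def hinv_def q_def rad z_def t_def by simp
    have "N^4 = cmod (- z + complex_of_real s * z * cis \<theta>) ^ 4 + (- B)^2"
      unfolding N_def hdist_def knorm_pow4 h1 fst_conv snd_conv comp2 B_def r_def m_def by (rule refl)
    also have "cmod (- z + complex_of_real s * z * cis \<theta>) ^ 4 = (cmod (- z + complex_of_real s * z * cis \<theta>) ^ 2)^2"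
      by (simp flip: power_mult)
    also have "\<dots> = (r * A)^2" unfolding comp1 A_def r_def m_def by (rule refl)
    finally show ?thesis by simp
  qed
  define \<sigma> where "\<sigma> = sqrt (r + e)"
  have \<sigma>0: "0 < \<sigma>" using r0 e0 by (simp add: \<sigma>_def)
  have \<sigma>2: "\<sigma>^2 = r + e" using r0 e0 by (simp add: \<sigma>_def)
  have m\<sigma>: "m \<le> \<sigma>" unfolding \<sigma>_def using e0 m0 r_def real_le_rsqrt by simp
  define L where "L = e / (3 * \<sigma>)"
  have L0: "0 < L" using e0 \<sigma>0 by (simp add: L_def)
  have lower: "L \<le> hdist q a" if a: "a \<in> hsphere" for a
  proof (rule ccontr)
    assume "\<not> L \<le> hdist q a"
    hence rl: "hdist q a < L" by simp
    define \<rho> where "\<rho> = hdist q a"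
    have \<rho>0: "0 \<le> \<rho>" by (simp add: \<rho>_def hdist_def knorm_nonneg)
    have "1 \<le> s^2 + \<rho>^2 + 2 * cmod (fst q) * \<rho>"
      using rev_tri[of a q] hsphere_norm[OF a] kq by (simp add: \<rho>_def hdist_def)
    also have "2 * cmod (fst q) * \<rho> \<le> 2 * m * L"
      using cq rl \<rho>0 m0 by (intro mult_mono) (auto simp: \<rho>_def)
    also have "\<rho>^2 < L^2" using rl \<rho>0 by (intro power_strict_mono) (auto simp: \<rho>_def)
    finally have "e < L^2 + 2 * m * L" by (simp add: e_def)
    moreover have "L^2 \<le> e / 9"
    proof -
      have "L^2 = e * e / (9 * (r + e))" by (simp add: L_def power2_eq_square \<sigma>2[symmetric])
      also have "\<dots> \<le> e * (r + e) / (9 * (r + e))" using e0 r0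
        by (intro divide_right_mono mult_left_mono) auto
      also have "\<dots> = e / 9" using e0 r0 by (simp add: field_simps)
      finally show ?thesis .
    qed
    moreover have "m * L \<le> e / 3"
    proof -
      have "m * L = (m / \<sigma>) * (e / 3)" by (simp add: L_def)
      also have "\<dots> \<le> 1 * (e / 3)" using m\<sigma> \<sigma>0 e0 by (intro mult_right_mono) auto
      finally show ?thesis by simp
    qed
    ultimately show False using e0 by linarith
  qed
  have hs: "L \<le> hsetdist q hsphere"
    unfolding hsetdist_def using om lower by (intro cINF_greatest) auto
  have "N^4 \<le> (16 * L)^4"
  proof -
    have "((r + e) * (r * A))^2 \<le> (18 * e^2)^2"
      using est1 r0 e0 A0 by (intro power_mono) (auto simp: algebra_simps)
    moreover have "((r + e) * B)^2 \<le> (18 * e^2)^2"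
    proof -
      have "((r + e) * B)^2 = ((r + e) * \<bar>B\<bar>)^2" by (simp only: power_mult_distrib power2_abs)
      also have "\<dots> \<le> (18 * e^2)^2" using est2 r0 e0 by (intro power_mono) auto
      finally show ?thesis .
    qed
    moreover have "(r + e)^2 * N^4 = ((r + e) * (r * A))^2 + ((r + e) * B)^2"
      unfolding N4 by algebra
    moreover have "(18 * e^2)^2 = 324 * e^4" by (simp flip: power_mult)
    ultimately have "(r + e)^2 * N^4 \<le> 648 * e^4" by linarith
    moreover have "(r + e)^2 * (16 * L)^4 = 65536 / 81 * e^4"
      using \<sigma>0 by (simp add: L_def power_mult_distrib power_divide \<sigma>2[symmetric] flip: power_mult)
    moreover have "648 * e^4 \<le> 65536 / 81 * e^4" using e0 by simp
    ultimately have "(r + e)^2 * N^4 \<le> (r + e)^2 * (16 * L)^4" by linarith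
    thus ?thesis using r0 e0 by simp
  qed
  hence "N \<le> 16 * L" using N0 L0 power_le_imp_le_base[of N 3 "16 * L"] by (simp add: numeral_eq_Suc)
  also have "\<dots> < (1 + 16) * L" using L0 by simp
  also have "\<dots> \<le> (1 + 16) * hsetdist q hsphere" using hs by simp
  finally have "hdist q \<omega> < (1 + 16) * hsetdist q hsphere" by (simp add: N_def)
  moreover have "q \<in> hball" using kq s by (simp add: hball_def)
  ultimately show "radial s \<omega> \<in> ntregion 16 \<omega>" by (simp add: ntregion_def q_def)
qed simp

end
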